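(* In the setting described in the context, let $(x^k)$, $(\bar x^k)$, $(\alpha_k)$ be the sequences generated by the Conceptual Algorithm (with either Method 1 or Method 2). Then, for each $k$, $x^k\in T_k$ if and only if $x^k\in\operatorname{zer}(A+B)$.
   Context: Let $\mathcal H$ be a real Hilbert space with inner product $\langle\cdot,\cdot\rangle$ and norm $\|\cdot\|$. Let $A_1:\mathcal H\to\mathcal H$ be $\beta$-cocoercive for some $\beta>0$ (i.e. $\langle A_1x-A_1y,x-y\rangle\ge\beta\|A_1x-A_1y\|^2$ for all $x,y$), let $A_2:\mathcal H\to\mathcal H$ be maximally monotone and uniformly continuous, let $B:\mathcal H\rightrightarrows\mathcal H$ be maximally monotone, and set $A:=A_1+A_2$. Assume $\operatorname{zer}(A+B):=\{x:0\in Ax+Bx\}\neq\emptyset$. $J_{\alpha B}:=(I+\alpha B)^{-1}$ for $\alpha>0$, and $P_C$ denotes the orthogonal projection onto a nonempty closed convex set $C$. Fix $\theta,\delta\in(0,1)$, $\bar\delta>0$ with $1-\delta-\bar\delta>0$, and $\alpha_{-1}>0$ with $\alpha_{-1}\le4\beta\bar\delta$. Conceptual Algorithm: pick $x^0\in\mathcal H$. Given $x^k$ and $\alpha_{k-1}$, for $j\in\mathbb N$ let $\bar x^k_j:=J_{\alpha_{k-1}\theta^jB}(x^k-\alpha_{k-1}\theta^jAx^k)$ and let $j(k)$ be the smallest $j\in\mathbb N$ with $\alpha_{k-1}\theta^j\langle A_2x^k-A_2\bar x^k_j,x^k-\bar x^k_j\rangle\le\delta\|x^k-\bar x^k_j\|^2$.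 Set $\alpha_k:=\alpha_{k-1}\theta^{j(k)}$, $\bar x^k:=J_{\alpha_kB}(x^k-\alpha_kAx^k)$, $r_k:=\frac{\bar\delta}{\alpha_k}\|x^k-\bar x^k\|^2$, $T_k:=\{x\in\mathcal H:\langle \frac{x^k-\bar x^k}{\alpha_k}-(A_2x^k-A_2\bar x^k),x-\bar x^k\rangle\le r_k\}$ and $\Gamma_k:=\{x\in\mathcal H:\langle x^0-x^k,x-x^k\rangle\le0\}$. Method 1 sets $x^{k+1}:=P_{T_k}(x^k)$; Method 2 sets $x^{k+1}:=P_{T_k\cap\Gamma_k}(x^0)$. The algorithm stops if $x^{k+1}=x^k$. *)

theory Defs
  imports "HOL-Analysis.Analysis"
begin

definition monotone_op :: "('a::real_inner \<Rightarrow> 'a set) \<Rightarrow> bool" where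
  "monotone_op B \<longleftrightarrow> (\<forall>x y u v. u \<in> B x \<longrightarrow> v \<in> B y \<longrightarrow> inner (u - v) (x - y) \<ge> 0)"

definition maximal_monotone :: "('a::real_inner \<Rightarrow> 'a set) \<Rightarrow> bool" where
  "maximal_monotone B \<longleftrightarrow> monotone_op B \<and>
     (\<forall>x u. (\<forall>y v. v \<in> B y \<longrightarrow> inner (u - v) (x - y) \<ge> 0) \<longrightarrow> u \<in> B x)"

definition cocoercive :: "real \<Rightarrow> ('a::real_inner \<Rightarrow> 'a) \<Rightarrow> bool" where
  "cocoercive \<beta> T \<longleftrightarrow> (\<forall>x y. inner (T x - T y) (x - y) \<ge> \<beta> * (norm (T x - T y))\<^sup>2)"

definition zer_sum :: "('a::real_inner \<Rightarrow> 'a) \<Rightarrow> ('a \<Rightarrow> 'a set) \<Rightarrow> 'a set" where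
  "zer_sum A B = {x. \<exists>b \<in> B x. A x + b = 0}"

text \<open>Resolvent J_{aB} z = (I + aB)^{-1} z, i.e. the p with z \<in> p + a B p.\<close>
definition resolvent :: "('a::real_inner \<Rightarrow> 'a set) \<Rightarrow> real \<Rightarrow> 'a \<Rightarrow> 'a" where
  "resolvent B a z = (THE p. (1 / a) *\<^sub>R (z - p) \<in> B p)"

definition proj :: "'a::real_inner set \<Rightarrow> 'a \<Rightarrow> 'a" where
  "proj C z = (THE p. p \<in> C \<and> (\<forall>y\<in>C. norm (z - p) \<le> norm (z - y)))"

definition fb_point :: "('a::real_inner \<Rightarrow> 'a set) \<Rightarrow> ('a \<Rightarrow> 'a) \<Rightarrow> real \<Rightarrow> 'a \<Rightarrow> 'a" where
  "fb_point B A a x = resolvent B a (x - a *\<^sub>R A x)"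

text \<open>Line search index j(k), given previous step size a = alpha_{k-1} and current iterate x.\<close>
definition ls_index :: "('a::real_inner \<Rightarrow> 'a set) \<Rightarrow> ('a \<Rightarrow> 'a) \<Rightarrow> ('a \<Rightarrow> 'a)
     \<Rightarrow> real \<Rightarrow> real \<Rightarrow> real \<Rightarrow> 'a \<Rightarrow> nat" where
  "ls_index B A A2 \<theta> \<delta> a x = (LEAST j::nat.
      a * \<theta> ^ j * inner (A2 x - A2 (fb_point B A (a * \<theta> ^ j) x)) (x - fb_point B A (a * \<theta> ^ j) x)
        \<le> \<delta> * (norm (x - fb_point B A (a * \<theta> ^ j) x))\<^sup>2)"

definition T_set :: "('a::real_inner \<Rightarrow> 'a set) \<Rightarrow> ('a \<Rightarrow> 'a) \<Rightarrow> ('a \<Rightarrow> 'a)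
     \<Rightarrow> real \<Rightarrow> real \<Rightarrow> 'a \<Rightarrow> 'a set" where
  "T_set B A A2 \<delta>b a x =
     (let xb = fb_point B A a x in
      {y. inner ((1 / a) *\<^sub>R (x - xb) - (A2 x - A2 xb)) (y - xb) \<le> (\<delta>b / a) * (norm (x - xb))\<^sup>2})"

definition Gamma_set :: "'a::real_inner \<Rightarrow> 'a \<Rightarrow> 'a set" where
  "Gamma_set x0 x = {y. inner (x0 - x) (y - x) \<le> 0}"

end

theory Submission
  imports Defs
begin

lemma par_mid:
  fixes a b :: "'a::real_inner"
  shows "(norm ((1/2) *\<^sub>R a + (1/2) *\<^sub>R b))^2 = (norm a)^2/2 + (norm b)^2/2 - (norm (a - b))^2/4"
  unfolding power2_norm_eq_inner by (simp add: inner_simps inner_commute field_simps)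

lemma sq_expand:
  fixes a h :: "'a::real_inner"
  shows "(norm (a + t *\<^sub>R h))^2 = (norm a)^2 + 2*t*inner a h + t^2 * (norm h)^2"
  unfolding power2_norm_eq_inner by (simp add: inner_simps inner_commute algebra_simps power2_eq_square)

lemma small_t:
  fixes a K :: real
  assumes "\<And>t. 0 < t \<Longrightarrow> t \<le> 1 \<Longrightarrow> a + t * K \<ge> 0" "K \<ge> 0"
  shows "a \<ge> 0"
proof (rule ccontr)
  assume "\<not> a \<ge> 0"
  have pos: "-a/(2*K+1) > 0" using \<open>\<not> a \<ge> 0\<close> assms(2) by (intro divide_pos_pos) auto
  define t where "t = min 1 (-a/(2*K+1))"
  have t: "0 < t" "t \<le> 1" using pos by (auto simp: t_def)
  have "t * K \<le> (-a/(2*K+1)) * K" using assms(2) by (intro mult_right_mono) (auto simp: t_def)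
  also have "\<dots> < -a" using \<open>\<not> a \<ge> 0\<close> assms(2) 
  proof -
    have "a * (1 + K) < 0" using \<open>\<not> a \<ge> 0\<close> assms(2) by (intro mult_neg_pos) auto
    then show ?thesis using assms(2) by (simp add: field_simps)
  qed
  finally show False using assms(1)[OF t] by linarith
qed

lemma aux_opt: fixes m F0 Fw t ia ib nx nu x0s u0s :: real
assumes "m \<le> (1-t)*F0 + t*Fw + (x0s + 2*t*ia + t^2*nx)/2 + (u0s + 2*t*ib + t^2*nu)/2"
  "F0 \<le> m - x0s/2 - u0s/2" "t>0"
shows "0 \<le> Fw - F0 + ia + ib + t*((nx+nu)/2)"
proof -
  have eq: "(1-t)*F0 + t*Fw + (x0s + 2*t*ia + t^2*nx)/2 + (u0s + 2*t*ib + t^2*nu)/2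
     = F0 + x0s/2 + u0s/2 + t * (Fw - F0 + ia + ib + t*((nx+nu)/2))"
    by (simp add: field_simps power2_eq_square)
  have "0 \<le> t * (Fw - F0 + ia + ib + t*((nx+nu)/2))" using assms(1,2) unfolding eq by linarith
  then show ?thesis using assms(3) by (simp add: zero_le_mult_iff)
qed

lemma minty0:
  fixes B :: "'a::{real_inner,complete_space} \<Rightarrow> 'a set"
  assumes mm: "maximal_monotone B"
  shows "\<exists>p. -p \<in> B p"
proof -
  have mono: "\<And>x y u v. u \<in> B x \<Longrightarrow> v \<in> B y \<Longrightarrow> inner (u - v) (x - y) \<ge> 0"
    using mm unfolding maximal_monotone_def monotone_op_def by blast
  have max: "\<And>x u. (\<And>y v. v \<in> B y \<Longrightarrow> inner (u - v) (x - y) \<ge> 0) \<Longrightarrow> u \<in> B x"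
    using mm unfolding maximal_monotone_def by blast
  define G where "G = {(y,v). v \<in> B y}"
  define \<phi> where "\<phi> = (\<lambda>x u (p::'a\<times>'a). inner x (snd p) + inner (fst p) u - inner (fst p) (snd p))"
  define D where "D = {(x,u). bdd_above (\<phi> x u ` G)}"
  define F where "F = (\<lambda>x u. Sup (\<phi> x u ` G))"
  define \<Psi> where "\<Psi> = (\<lambda>x u. F x u + (norm x)^2/2 + (norm u)^2/2)"
  have Gne: "G \<noteq> {}"
  proof
    assume "G = {}"
    then have "0 \<in> B 0" using max[of 0 0] by (auto simp: G_def)
    then show False using \<open>G = {}\<close> by (auto simp: G_def)
  qed
  have F1: "\<phi> x u (y,v) \<le> F x u" if "(x,u) \<in> D" "v \<in> B y" for x u y v
    using that unfolding D_def F_def G_def by (auto intro!: cSup_upper)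
  have F2: "(x,u) \<in> D \<and> F x u \<le> c" if "\<And>y v. v \<in> B y \<Longrightarrow> \<phi> x u (y,v) \<le> c" for x u c
  proof
    show "(x,u) \<in> D" unfolding D_def bdd_above_def using that by (auto simp: G_def)
    show "F x u \<le> c" unfolding F_def using Gne that by (intro cSup_least) (auto simp: G_def)
  qed
  have F3: "inner x u \<le> F x u" if "(x,u) \<in> D" for x u
  proof (rule ccontr)
    assume "\<not> inner x u \<le> F x u"
    then have lt: "F x u < inner x u" by simp
    have "u \<in> B x"
    proof (rule max)
      fix y v assume "v \<in> B y"
      have "\<phi> x u (y,v) \<le> F x u" by (rule F1[OF that \<open>v \<in> B y\<close>])
      moreover have "inner (u - v) (x - y) = inner x u - \<phi> x u (y,v)"
        by (simp add: \<phi>_def inner_simps inner_commute)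
      ultimately show "inner (u - v) (x - y) \<ge> 0" using lt by linarith
    qed
    then have "\<phi> x u (x,u) \<le> F x u" by (rule F1[OF that])
    then show False using lt by (simp add: \<phi>_def inner_commute)
  qed
  have F4: "(y,v) \<in> D \<and> F y v = inner y v" if "v \<in> B y" for y v
  proof -
    have "(y,v) \<in> D \<and> F y v \<le> inner y v"
    proof (rule F2)
      fix y' v' assume "v' \<in> B y'"
      have "inner (v - v') (y - y') \<ge> 0" by (rule mono[OF that \<open>v' \<in> B y'\<close>])
      moreover have "inner (v - v') (y - y') = inner y v - \<phi> y v (y',v')"
        by (simp add: \<phi>_def inner_simps inner_commute)
      ultimately show "\<phi> y v (y',v') \<le> inner y v" by linarith
    qed
    with F3[of y v] show ?thesis by auto
  qed
  have F5: "((1-t) *\<^sub>R x1 + t *\<^sub>R x2, (1-t) *\<^sub>R u1 + t *\<^sub>R u2) \<in> D \<and>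
      F ((1-t) *\<^sub>R x1 + t *\<^sub>R x2) ((1-t) *\<^sub>R u1 + t *\<^sub>R u2) \<le> (1-t) * F x1 u1 + t * F x2 u2"
    if "(x1,u1) \<in> D" "(x2,u2) \<in> D" "0 \<le> t" "t \<le> 1" for x1 u1 x2 u2 t
  proof (rule F2)
    fix y v assume "v \<in> B y"
    have "\<phi> ((1-t) *\<^sub>R x1 + t *\<^sub>R x2) ((1-t) *\<^sub>R u1 + t *\<^sub>R u2) (y,v)
        = (1-t) * \<phi> x1 u1 (y,v) + t * \<phi> x2 u2 (y,v)"
      by (simp add: \<phi>_def inner_simps algebra_simps)
    also have "\<dots> \<le> (1-t) * F x1 u1 + t * F x2 u2"
      using F1[OF that(1) \<open>v \<in> B y\<close>] F1[OF that(2) \<open>v \<in> B y\<close>] that(3,4)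
      by (intro add_mono mult_left_mono) auto
    finally show "\<phi> ((1-t) *\<^sub>R x1 + t *\<^sub>R x2) ((1-t) *\<^sub>R u1 + t *\<^sub>R u2) (y,v)
        \<le> (1-t) * F x1 u1 + t * F x2 u2" .
  qed
  have Psipos: "\<Psi> x u \<ge> 0" if "(x,u) \<in> D" for x u
  proof -
    have "(norm (x + u))^2 = (norm x)^2 + 2 * inner x u + (norm u)^2"
      unfolding power2_norm_eq_inner by (simp add: inner_simps inner_commute)
    moreover have "0 \<le> (norm (x + u))^2" by simp
    ultimately show ?thesis using F3[OF that] unfolding \<Psi>_def by linarith
  qed
  have Dne: "D \<noteq> {}" using Gne F4 by (auto simp: G_def)
  define m where "m = Inf ((\<lambda>(x,u). \<Psi> x u) ` D)"
  have bddb: "bdd_below ((\<lambda>(x,u). \<Psi> x u) ` D)"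
    unfolding bdd_below_def using Psipos by (intro exI[of _ 0]) auto
  have m_le: "m \<le> \<Psi> x u" if "(x,u) \<in> D" for x u
    unfolding m_def using bddb that by (metis (no_types, lifting) case_prod_conv cInf_lower image_eqI)
  have "\<exists>z\<in>D. (\<lambda>(x,u). \<Psi> x u) z < m + 1 / Suc n" for n
  proof -
    have "Inf ((\<lambda>(x,u). \<Psi> x u) ` D) < m + 1 / Suc n" unfolding m_def by simp
    then show ?thesis using Dne by (subst (asm) cInf_less_iff) (auto simp: bddb)
  qed
  then obtain zs where zs: "\<And>n. zs n \<in> D" "\<And>n. (\<lambda>(x,u). \<Psi> x u) (zs n) < m + 1 / Suc n"
    by metis
  define xs where "xs = (\<lambda>n. fst (zs n))"
  define us where "us = (\<lambda>n. snd (zs n))"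
  have zsD: "(xs n, us n) \<in> D" for n using zs(1)[of n] by (simp add: xs_def us_def)
  have zsP: "\<Psi> (xs n) (us n) < m + 1 / Suc n" for n
    using zs(2)[of n] by (simp add: xs_def us_def split: prod.splits)
  have mid: "(norm (a1 - a2))^2 + (norm (b1 - b2))^2 \<le> 4 * (\<Psi> a1 b1 + \<Psi> a2 b2 - 2 * m)"
    if "(a1,b1) \<in> D" "(a2,b2) \<in> D" for a1 b1 a2 b2
  proof -
    define ma where "ma = (1/2) *\<^sub>R a1 + (1/2) *\<^sub>R a2"
    define mb where "mb = (1/2) *\<^sub>R b1 + (1/2) *\<^sub>R b2"
    have h: "(ma, mb) \<in> D \<and> F ma mb \<le> (1/2) * F a1 b1 + (1/2) * F a2 b2"
      using F5[OF that, of "1/2"] by (simp add: ma_def mb_def)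
    have "m \<le> \<Psi> ma mb"
      using h by (intro m_le) auto
    moreover have "(norm ma)^2 = (norm a1)^2/2 + (norm a2)^2/2 - (norm (a1 - a2))^2/4"
      using par_mid[of a1 a2] by (simp add: ma_def)
    moreover have "(norm mb)^2 = (norm b1)^2/2 + (norm b2)^2/2 - (norm (b1 - b2))^2/4"
      using par_mid[of b1 b2] by (simp add: mb_def)
    ultimately show ?thesis using h[THEN conjunct2] unfolding \<Psi>_def by argo
  qed
  have Cauchy_bound: "(norm (xs i - xs j))^2 + (norm (us i - us j))^2 \<le> 4 * (1 / Suc i + 1 / Suc j)" for i j
    using mid[OF zsD zsD, of i j] zsP[of i] zsP[of j] by argo
  have CS: "Cauchy xs \<and> Cauchy us"
  proof -
    have *: "\<exists>N. \<forall>i\<ge>N. \<forall>j\<ge>N. (norm (xs i - xs j))^2 + (norm (us i - us j))^2 < e^2" if "e > 0" for e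
    proof -
      obtain N :: nat where N: "8 / e^2 < N" using reals_Archimedean2 by blast
      have "\<forall>i\<ge>N. \<forall>j\<ge>N. (norm (xs i - xs j))^2 + (norm (us i - us j))^2 < e^2"
      proof (intro allI impI)
        fix i j assume ij: "N \<le> i" "N \<le> j"
        have e2: "e^2 > 0" using that by simp
        have "1 / Suc i < e^2 / 8"
        proof -
          have "8 / e^2 < Suc i" using N ij by linarith
          then have "8 < Suc i * e^2" using e2 by (simp add: field_simps)
          then show ?thesis using e2 by (simp add: field_simps)
        qed
        moreover have "1 / Suc j < e^2 / 8"
        proof -
          have "8 / e^2 < Suc j" using N ij by linarith
          then have "8 < Suc j * e^2" using e2 by (simp add: field_simps)
          then show ?thesis using e2 by (simp add: field_simps)
        qed
        ultimately show "(norm (xs i - xs j))^2 + (norm (us i - us j))^2 < e^2"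
          using Cauchy_bound[of i j] by argo
      qed
      then show ?thesis by blast
    qed
    have "Cauchy xs"
    proof (rule metric_CauchyI)
      fix e :: real assume "e > 0"
      then obtain N where N: "\<forall>i\<ge>N. \<forall>j\<ge>N. (norm (xs i - xs j))^2 + (norm (us i - us j))^2 < e^2"
        using * by blast
      show "\<exists>N. \<forall>i\<ge>N. \<forall>j\<ge>N. dist (xs i) (xs j) < e"
      proof (intro exI allI impI)
        fix i j assume "N \<le> i" "N \<le> j"
        then have "(norm (xs i - xs j))^2 < e^2" using N by (smt (verit) zero_le_power2)
        then show "dist (xs i) (xs j) < e" using \<open>e > 0\<close>
          by (simp add: dist_norm power_less_imp_less_base)
      qed
    qed
    moreover have "Cauchy us"
    proof (rule metric_CauchyI)
      fix e :: real assume "e > 0"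
      then obtain N where N: "\<forall>i\<ge>N. \<forall>j\<ge>N. (norm (xs i - xs j))^2 + (norm (us i - us j))^2 < e^2"
        using * by blast
      show "\<exists>N. \<forall>i\<ge>N. \<forall>j\<ge>N. dist (us i) (us j) < e"
      proof (intro exI allI impI)
        fix i j assume "N \<le> i" "N \<le> j"
        then have "(norm (us i - us j))^2 < e^2" using N by (smt (verit) zero_le_power2)
        then show "dist (us i) (us j) < e" using \<open>e > 0\<close>
          by (simp add: dist_norm power_less_imp_less_base)
      qed
    qed
    ultimately show ?thesis by simp
  qed
  then obtain x0 u0 where x0: "xs \<longlonglongrightarrow> x0" and u0: "us \<longlonglongrightarrow> u0"
    using Cauchy_convergent_iff convergent_def by metis
  have lim: "(x0,u0) \<in> D \<and> F x0 u0 \<le> m - (norm x0)^2/2 - (norm u0)^2/2"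
  proof (rule F2)
    fix y v assume "v \<in> B y"
    have le: "\<phi> (xs n) (us n) (y,v) + (norm (xs n))^2/2 + (norm (us n))^2/2 \<le> m + 1 / Suc n" for n
      using F1[OF zsD \<open>v \<in> B y\<close>, of n] zsP[of n] unfolding \<Psi>_def by linarith
    have t1: "(\<lambda>n. \<phi> (xs n) (us n) (y,v) + (norm (xs n))^2/2 + (norm (us n))^2/2)
        \<longlonglongrightarrow> \<phi> x0 u0 (y,v) + (norm x0)^2/2 + (norm u0)^2/2"
      unfolding \<phi>_def using x0 u0 by (auto intro!: tendsto_intros)
    have t2: "(\<lambda>n. m + 1 / Suc n) \<longlonglongrightarrow> m + 0"
    proof -
      have "(\<lambda>n. 1 / real (Suc n)) \<longlonglongrightarrow> 0"
        using LIMSEQ_Suc[OF lim_1_over_n] by simp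
      then show ?thesis by (intro tendsto_intros)
    qed
    have "\<phi> x0 u0 (y,v) + (norm x0)^2/2 + (norm u0)^2/2 \<le> m + 0"
      using t1 t2 le by (intro LIMSEQ_le) auto
    then show "\<phi> x0 u0 (y,v) \<le> m - (norm x0)^2/2 - (norm u0)^2/2" by simp
  qed
  have opt: "F x u - F x0 u0 + inner x0 (x - x0) + inner u0 (u - u0) \<ge> 0" if "(x,u) \<in> D" for x u
  proof (rule small_t)
    fix t :: real assume t: "0 < t" "t \<le> 1"
    have h: "((1-t) *\<^sub>R x0 + t *\<^sub>R x, (1-t) *\<^sub>R u0 + t *\<^sub>R u) \<in> D \<and>
      F ((1-t) *\<^sub>R x0 + t *\<^sub>R x) ((1-t) *\<^sub>R u0 + t *\<^sub>R u) \<le> (1-t) * F x0 u0 + t * F x u"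
      using t by (intro F5 lim[THEN conjunct1] that) auto
    have m1: "m \<le> \<Psi> ((1-t) *\<^sub>R x0 + t *\<^sub>R x) ((1-t) *\<^sub>R u0 + t *\<^sub>R u)"
      using h by (intro m_le) auto
    have ex: "(1-t) *\<^sub>R x0 + t *\<^sub>R x = x0 + t *\<^sub>R (x - x0)" "(1-t) *\<^sub>R u0 + t *\<^sub>R u = u0 + t *\<^sub>R (u - u0)"
      by (simp_all add: algebra_simps)
    have "m \<le> (1-t) * F x0 u0 + t * F x u + ((norm x0)^2 + 2*t*inner x0 (x - x0) + t^2 * (norm (x - x0))^2)/2
          + ((norm u0)^2 + 2*t*inner u0 (u - u0) + t^2 * (norm (u - u0))^2)/2"
      using m1 h unfolding \<Psi>_def ex sq_expand by linarith
    then show "0 \<le> F x u - F x0 u0 + inner x0 (x - x0) + inner u0 (u - u0)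
        + t * (((norm (x - x0))^2 + (norm (u - u0))^2)/2)"
      using lim t by (intro aux_opt) auto
  qed simp
  have F0: "inner x0 u0 \<le> F x0 u0" using F3 lim by blast
  have "-x0 \<in> B (-u0)"
  proof (rule max)
    fix y v assume yv: "v \<in> B y"
    have "0 \<le> F y v - F x0 u0 + inner x0 (y - x0) + inner u0 (v - u0)"
      using opt F4[OF yv] by blast
    then have "0 \<le> inner y v - inner x0 u0 + inner x0 (y - x0) + inner u0 (v - u0)"
      using F4[OF yv] F0 by linarith
    moreover have "inner (x0 + u0) (x0 + u0) = inner x0 x0 + 2 * inner x0 u0 + inner u0 u0"
      by (simp add: inner_simps inner_commute)
    moreover have "0 \<le> inner (x0 + u0) (x0 + u0)" by simp
    ultimately have "0 \<le> inner y v + inner x0 y + inner u0 v + inner x0 u0"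
      by (simp add: inner_simps)
    then show "0 \<le> inner (- x0 - v) (- u0 - y)"
      by (simp add: inner_simps inner_commute)
  qed
  then have "0 \<le> F (-u0) (-x0) - F x0 u0 + inner x0 (-u0 - x0) + inner u0 (-x0 - u0)"
    using opt F4 by blast
  then have "0 \<le> inner u0 x0 - inner x0 u0 + inner x0 (-u0 - x0) + inner u0 (-x0 - u0)"
    using F4[OF \<open>-x0 \<in> B (-u0)\<close>] F0 by simp
  then have "inner (x0 + u0) (x0 + u0) \<le> 0"
    by (simp add: inner_simps inner_commute)
  then have "x0 + u0 = 0" using inner_gt_zero_iff[of "x0 + u0"] by linarith
  then have "u0 = -x0" by (simp add: add_eq_0_iff)
  then show ?thesis using \<open>-x0 \<in> B (-u0)\<close> by (intro exI[of _ "-u0"]) simp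
qed


lemma minty:
  fixes B :: "'a::{real_inner,complete_space} \<Rightarrow> 'a set"
  assumes mm: "maximal_monotone B" and a: "a > 0"
  shows "\<exists>p. (1/a) *\<^sub>R (z - p) \<in> B p"
proof -
  have mono: "\<And>x y u v. u \<in> B x \<Longrightarrow> v \<in> B y \<Longrightarrow> inner (u - v) (x - y) \<ge> 0"
    using mm unfolding maximal_monotone_def monotone_op_def by blast
  have max: "\<And>x u. (\<And>y v. v \<in> B y \<Longrightarrow> inner (u - v) (x - y) \<ge> 0) \<Longrightarrow> u \<in> B x"
    using mm unfolding maximal_monotone_def by blast
  define B' where "B' = (\<lambda>y. {v. (1/a) *\<^sub>R (v + z) \<in> B y})"
  have "maximal_monotone B'"
    unfolding maximal_monotone_def monotone_op_def
  proof (intro conjI allI impI)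
    fix x y u v assume "u \<in> B' x" "v \<in> B' y"
    then have "inner ((1/a) *\<^sub>R (u + z) - (1/a) *\<^sub>R (v + z)) (x - y) \<ge> 0"
      by (intro mono) (auto simp: B'_def)
    moreover have "(1/a) *\<^sub>R (u + z) - (1/a) *\<^sub>R (v + z) = (1/a) *\<^sub>R (u - v)"
      by (simp add: algebra_simps)
    ultimately show "inner (u - v) (x - y) \<ge> 0" using a
      by (simp add: zero_le_divide_iff)
  next
    fix x u assume h: "\<forall>y v. v \<in> B' y \<longrightarrow> 0 \<le> inner (u - v) (x - y)"
    have "(1/a) *\<^sub>R (u + z) \<in> B x"
    proof (rule max)
      fix y w assume "w \<in> B y"
      then have "a *\<^sub>R w - z \<in> B' y" using a by (simp add: B'_def)
      then have "0 \<le> inner (u - (a *\<^sub>R w - z)) (x - y)" using h by blast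
      moreover have "(1/a) *\<^sub>R (u + z) - w = (1/a) *\<^sub>R (u - (a *\<^sub>R w - z))"
        using a by (simp add: algebra_simps)
      ultimately show "0 \<le> inner ((1/a) *\<^sub>R (u + z) - w) (x - y)" using a by simp
    qed
    then show "u \<in> B' x" by (simp add: B'_def)
  qed
  then obtain p where "-p \<in> B' p" using minty0 by blast
  then have "(1/a) *\<^sub>R (z - p) \<in> B p" by (simp add: B'_def algebra_simps)
  then show ?thesis by blast
qed

lemma resolvent_unique:
  assumes mono: "monotone_op B" and a: "a > 0"
    and p: "(1/a) *\<^sub>R (z - p) \<in> B p" and q: "(1/a) *\<^sub>R (z - q) \<in> B q"
  shows "p = q"
proof -
  have "inner ((1/a) *\<^sub>R (z - p) - (1/a) *\<^sub>R (z - q)) (p - q) \<ge> 0"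
    using mono p q unfolding monotone_op_def by blast
  moreover have "(1/a) *\<^sub>R (z - p) - (1/a) *\<^sub>R (z - q) = -((1/a) *\<^sub>R (p - q))"
    by (simp add: algebra_simps)
  ultimately have "inner (p - q) (p - q) \<le> 0" using a
    by (simp add: divide_le_0_iff)
  then have "\<not> 0 < inner (p - q) (p - q)" by linarith
  then have "p - q = 0" using inner_gt_zero_iff[of "p - q"] by blast
  then show ?thesis by simp
qed

lemma resolvent_prop:
  fixes B :: "'a::{real_inner,complete_space} \<Rightarrow> 'a set"
  assumes mm: "maximal_monotone B" and a: "a > 0"
  shows "(1/a) *\<^sub>R (z - resolvent B a z) \<in> B (resolvent B a z)"
proof -
  obtain p where p: "(1/a) *\<^sub>R (z - p) \<in> B p" using minty[OF mm a] by blast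
  have mono: "monotone_op B" using mm by (simp add: maximal_monotone_def)
  have "\<exists>!p. (1/a) *\<^sub>R (z - p) \<in> B p"
    using p resolvent_unique[OF mono a] by blast
  then show ?thesis unfolding resolvent_def by (rule theI')
qed

lemma resolvent_eq:
  fixes B :: "'a::{real_inner,complete_space} \<Rightarrow> 'a set"
  assumes mm: "maximal_monotone B" and a: "a > 0" and p: "(1/a) *\<^sub>R (z - p) \<in> B p"
  shows "resolvent B a z = p"
proof -
  have mono: "monotone_op B" using mm by (simp add: maximal_monotone_def)
  show ?thesis using resolvent_unique[OF mono a resolvent_prop[OF mm a, of z] p] .
qed

lemma uc_bounded:
  fixes f :: "'a::real_normed_vector \<Rightarrow> 'b::real_normed_vector"
  assumes "uniformly_continuous_on UNIV f"
  shows "\<exists>M. \<forall>y. norm (y - x) \<le> R \<longrightarrow> norm (f y - f x) \<le> M"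
proof -
  obtain e where e: "e > 0" "\<And>y y'. dist y' y < e \<Longrightarrow> dist (f y') (f y) < 1"
    using assms unfolding uniformly_continuous_on_def by (metis UNIV_I zero_less_one)
  have ind: "\<forall>y. norm (y - x) \<le> real n * (e/2) \<longrightarrow> norm (f y - f x) \<le> real n" for n
  proof (induction n)
    case 0 then show ?case by simp
  next
    case (Suc n)
    show ?case
    proof (intro allI impI)
      fix y assume y: "norm (y - x) \<le> real (Suc n) * (e/2)"
      show "norm (f y - f x) \<le> real (Suc n)"
      proof (cases "norm (y - x) \<le> e/2")
        case True
        then have "dist y x < e" using e by (simp add: dist_norm)
        then have "dist (f y) (f x) < 1" using e(2) by blast
        then show ?thesis by (simp add: dist_norm)
      next
        case False
        define r where "r = norm (y - x)"
        have r: "r > e/2" using False by (simp add: r_def)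
        define y' where "y' = x + (1 - (e/2)/r) *\<^sub>R (y - x)"
        have c: "0 \<le> 1 - (e/2)/r" "1 - (e/2)/r \<le> 1" using r e by (auto simp: field_simps)
        have "norm (y' - x) = (1 - (e/2)/r) * r" using c by (simp add: y'_def r_def)
        also have "\<dots> = r - e/2" using r e by (simp add: field_simps)
        also have "\<dots> \<le> real n * (e/2)" using y by (simp add: r_def algebra_simps)
        finally have "norm (f y' - f x) \<le> real n" using Suc by blast
        moreover have "y - y' = ((e/2)/r) *\<^sub>R (y - x)" by (simp add: y'_def algebra_simps)
        have "y \<noteq> x" using r e by (auto simp: r_def)
        then have "norm (y - y') = e/2" using r e \<open>y - y' = _\<close> by (simp add: r_def)
        then have "dist (f y) (f y') < 1" using e by (intro e(2)) (simp add: dist_norm)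
        then have "norm (f y - f y') < 1" by (simp add: dist_norm)
        moreover have "norm (f y - f x) \<le> norm (f y - f y') + norm (f y' - f x)"
          using norm_triangle_ineq[of "f y - f y'" "f y' - f x"] by simp
        ultimately show ?thesis by simp
      qed
    qed
  qed
  obtain n :: nat where n: "R / (e/2) < n" using reals_Archimedean2 by blast
  then have "R \<le> real n * (e/2)" using e by (simp add: field_simps)
  then show ?thesis using ind[of n] by (intro exI[of _ "real n"]) auto
qed


lemma fb_prop:
  fixes B :: "'a::{real_inner,complete_space} \<Rightarrow> 'a set"
  assumes mm: "maximal_monotone B" and a: "a > 0"
  shows "(1/a) *\<^sub>R (x - fb_point B A a x) - A x \<in> B (fb_point B A a x)"
proof -
  have "(1/a) *\<^sub>R (x - a *\<^sub>R A x - fb_point B A a x) \<in> B (fb_point B A a x)"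
    unfolding fb_point_def by (rule resolvent_prop[OF mm a])
  moreover have "(1/a) *\<^sub>R (x - a *\<^sub>R A x - fb_point B A a x) = (1/a) *\<^sub>R (x - fb_point B A a x) - A x"
    using a by (simp add: algebra_simps)
  ultimately show ?thesis by simp
qed

lemma fb_fix_iff:
  fixes B :: "'a::{real_inner,complete_space} \<Rightarrow> 'a set"
  assumes mm: "maximal_monotone B" and a: "a > 0"
  shows "fb_point B A a x = x \<longleftrightarrow> x \<in> zer_sum A B"
proof
  assume "fb_point B A a x = x"
  then have "- A x \<in> B x" using fb_prop[OF mm a, of x A] by simp
  then show "x \<in> zer_sum A B" unfolding zer_sum_def by (intro CollectI bexI[of _ "- A x"]) auto
next
  assume "x \<in> zer_sum A B"
  then obtain b where b: "b \<in> B x" "A x + b = 0" unfolding zer_sum_def by blast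
  then have "b = - A x" by (simp add: add_eq_0_iff)
  have "(1/a) *\<^sub>R (x - a *\<^sub>R A x - x) \<in> B x" using b \<open>b = - A x\<close> a by simp
  then show "fb_point B A a x = x" unfolding fb_point_def by (rule resolvent_eq[OF mm a])
qed

lemma step_mono:
  fixes B :: "'a::{real_inner,complete_space} \<Rightarrow> 'a set"
  assumes mm: "maximal_monotone B" and m1: "0 < m1" and m12: "m1 \<le> m2"
  shows "norm (x - fb_point B A m1 x) \<le> norm (x - fb_point B A m2 x) \<and>
         m1 * norm (x - fb_point B A m2 x) \<le> m2 * norm (x - fb_point B A m1 x)"
proof -
  have m2: "0 < m2" using m1 m12 by linarith
  define a1 where "a1 = x - fb_point B A m1 x"
  define a2 where "a2 = x - fb_point B A m2 x"
  define s where "s = norm a1"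
  define t where "t = norm a2"
  have u1: "(1/m1) *\<^sub>R a1 - A x \<in> B (fb_point B A m1 x)" using fb_prop[OF mm m1] by (simp add: a1_def)
  have u2: "(1/m2) *\<^sub>R a2 - A x \<in> B (fb_point B A m2 x)" using fb_prop[OF mm m2] by (simp add: a2_def)
  have "inner (((1/m1) *\<^sub>R a1 - A x) - ((1/m2) *\<^sub>R a2 - A x)) (fb_point B A m1 x - fb_point B A m2 x) \<ge> 0"
    using mm u1 u2 unfolding maximal_monotone_def monotone_op_def by blast
  moreover have "((1/m1) *\<^sub>R a1 - A x) - ((1/m2) *\<^sub>R a2 - A x) = (1/(m1*m2)) *\<^sub>R (m2 *\<^sub>R a1 - m1 *\<^sub>R a2)"
    using m1 m2 by (simp add: algebra_simps)
  moreover have "fb_point B A m1 x - fb_point B A m2 x = a2 - a1" by (simp add: a1_def a2_def)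
  moreover have "m1 * m2 > 0" using m1 m2 by simp
  ultimately have "inner (m2 *\<^sub>R a1 - m1 *\<^sub>R a2) (a2 - a1) \<ge> 0"
    by (simp add: zero_le_divide_iff zero_le_mult_iff)
  then have "m2 * inner a1 a2 - m2 * inner a1 a1 - m1 * inner a2 a2 + m1 * inner a1 a2 \<ge> 0"
    by (simp add: inner_simps inner_commute algebra_simps)
  moreover have "inner a1 a1 = s^2" "inner a2 a2 = t^2" by (simp_all add: s_def t_def power2_norm_eq_inner)
  moreover have "inner a1 a2 \<le> s * t" unfolding s_def t_def by (rule norm_cauchy_schwarz)
  ultimately have "m2 * s^2 + m1 * t^2 \<le> (m1 + m2) * (s * t)"
    using m1 m2 by (smt (verit, best) mult_left_mono distrib_right)
  then have key: "0 \<le> (t - s) * (m2 * s - m1 * t)" by (simp add: algebra_simps power2_eq_square)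
  have s0: "s \<ge> 0" "t \<ge> 0" by (simp_all add: s_def t_def)
  have st: "s \<le> t"
  proof (rule ccontr)
    assume "\<not> s \<le> t"
    then have "t - s < 0" by simp
    then have "m2 * s - m1 * t \<le> 0" using key by (simp add: zero_le_mult_iff)
    moreover have "m1 * t \<le> m2 * t" using m12 s0 by (simp add: mult_right_mono)
    ultimately have "m2 * s \<le> m2 * t" by linarith
    then show False using m2 \<open>\<not> s \<le> t\<close> by simp
  qed
  have "m1 * t \<le> m2 * s"
  proof (rule ccontr)
    assume "\<not> m1 * t \<le> m2 * s"
    then have "m2 * s - m1 * t < 0" by simp
    then have "t - s \<le> 0" using key by (simp add: zero_le_mult_iff)
    then have "t = s" using st by simp
    then show False using \<open>\<not> m1 * t \<le> m2 * s\<close> m12 s0 by (simp add: mult_right_mono)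
  qed
  then show ?thesis using st by (simp add: s_def t_def a1_def a2_def)
qed


lemma ls_exists:
  fixes B :: "'a::{real_inner,complete_space} \<Rightarrow> 'a set" and A A2 :: "'a \<Rightarrow> 'a"
  assumes mm: "maximal_monotone B" and uc: "uniformly_continuous_on UNIV A2"
    and a: "a > 0" and th: "0 < \<theta>" "\<theta> < 1" and dl: "\<delta> > 0"
    and nz: "x \<notin> zer_sum A B"
  shows "\<exists>j. a * \<theta> ^ j * inner (A2 x - A2 (fb_point B A (a * \<theta> ^ j) x)) (x - fb_point B A (a * \<theta> ^ j) x)
        \<le> \<delta> * (norm (x - fb_point B A (a * \<theta> ^ j) x))\<^sup>2"
proof (rule ccontr)
  assume nt: "\<not> ?thesis"
  define mu where "mu = (\<lambda>j::nat. a * \<theta> ^ j)"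
  define p where "p = (\<lambda>j. fb_point B A (mu j) x)"
  define d where "d = (\<lambda>j. norm (x - p j))"
  have fail: "\<delta> * (d j)^2 < mu j * inner (A2 x - A2 (p j)) (x - p j)" for j
    using nt unfolding mu_def p_def d_def by (meson not_le)
  have mupos: "mu j > 0" for j using a th by (simp add: mu_def)
  have mule: "mu j \<le> a" for j
  proof -
    have "\<theta> ^ j \<le> 1" using th by (simp add: power_le_one)
    then show ?thesis using a by (simp add: mu_def mult_left_le)
  qed
  have p0: "p 0 = fb_point B A a x" by (simp add: p_def mu_def)
  define d0 where "d0 = norm (x - fb_point B A a x)"
  have d0pos: "d0 > 0"
  proof -
    have "fb_point B A a x \<noteq> x" using fb_fix_iff[OF mm a] nz by blast
    then show ?thesis by (simp add: d0_def)
  qed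
  define c where "c = d0 / a"
  have cpos: "c > 0" using d0pos a by (simp add: c_def)
  have dle: "d j \<le> d0" and dge: "c * mu j \<le> d j" for j
  proof -
    have h: "norm (x - p j) \<le> d0 \<and> mu j * d0 \<le> a * norm (x - p j)"
      using step_mono[OF mm mupos mule, of x A] by (simp add: p_def d0_def)
    then show "d j \<le> d0" by (simp add: d_def)
    have "mu j * d0 / a \<le> norm (x - p j)" using h a by (simp add: field_simps)
    then show "c * mu j \<le> d j" by (simp add: c_def d_def mult.commute)
  qed
  have dpos: "d j > 0" for j using dge[of j] cpos mupos[of j] by (smt (verit) mult_pos_pos)
  have big: "\<delta> * c < norm (A2 x - A2 (p j))" for j
  proof -
    have "\<delta> * (d j)^2 < mu j * (norm (A2 x - A2 (p j)) * d j)"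
      using fail[of j] norm_cauchy_schwarz[of "A2 x - A2 (p j)" "x - p j"] mupos[of j]
      by (smt (verit) d_def mult_left_mono)
    then have "\<delta> * d j < mu j * norm (A2 x - A2 (p j))"
      using dpos[of j] by (simp add: power2_eq_square algebra_simps)
    moreover have "\<delta> * (c * mu j) \<le> \<delta> * d j" using dge[of j] dl by simp
    ultimately have "mu j * (\<delta> * c) < mu j * norm (A2 x - A2 (p j))" by (simp add: algebra_simps)
    then show ?thesis using mupos[of j] by simp
  qed
  obtain eta where eta: "eta > 0" "\<And>y y'. dist y' y < eta \<Longrightarrow> dist (A2 y') (A2 y) < \<delta> * c"
    using uc unfolding uniformly_continuous_on_def using dl cpos
    by (metis UNIV_I mult_pos_pos)
  have deta: "eta \<le> d j" for j
  proof (rule ccontr)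
    assume "\<not> eta \<le> d j"
    then have "dist (p j) x < eta" by (simp add: d_def dist_norm norm_minus_commute)
    then have "dist (A2 (p j)) (A2 x) < \<delta> * c" by (rule eta(2))
    then show False using big[of j] by (simp add: dist_norm norm_minus_commute)
  qed
  obtain M where M: "\<And>y. norm (y - x) \<le> d0 \<Longrightarrow> norm (A2 y - A2 x) \<le> M"
    using uc_bounded[OF uc, of x d0] by blast
  have bnd: "\<delta> * eta < mu j * M" for j
  proof -
    have "norm (p j - x) \<le> d0" using dle[of j] by (simp add: d_def norm_minus_commute)
    then have "norm (A2 (p j) - A2 x) \<le> M" by (rule M)
    then have n: "norm (A2 x - A2 (p j)) \<le> M" by (simp add: norm_minus_commute)
    have "\<delta> * d j < mu j * norm (A2 x - A2 (p j))"
    proof -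
      have "\<delta> * (d j)^2 < mu j * (norm (A2 x - A2 (p j)) * d j)"
        using fail[of j] norm_cauchy_schwarz[of "A2 x - A2 (p j)" "x - p j"] mupos[of j]
        by (smt (verit) d_def mult_left_mono)
      then show ?thesis using dpos[of j] by (simp add: power2_eq_square algebra_simps)
    qed
    also have "\<dots> \<le> mu j * M" using n mupos[of j] by simp
    finally have "\<delta> * d j < mu j * M" .
    moreover have "\<delta> * eta \<le> \<delta> * d j" using deta[of j] dl by simp
    ultimately show ?thesis by linarith
  qed
  have Mpos: "M > 0" using bnd[of 0] dl eta mupos[of 0]
    by (smt (verit) mult_pos_pos mult_nonneg_nonpos)
  have q: "\<delta> * eta / (a * M) > 0" using dl eta a Mpos by simp
  obtain j where j: "\<theta> ^ j < \<delta> * eta / (a * M)" using real_arch_pow_inv[OF q th(2)] by blast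
  then have "\<theta> ^ j * (a * M) < \<delta> * eta" using a Mpos by (simp add: field_simps)
  then have "mu j * M < \<delta> * eta" by (simp add: mu_def algebra_simps)
  then show False using bnd[of j] by linarith
qed

theorem proposition4p5:
  fixes A1 A2 :: "'a::{real_inner, complete_space} \<Rightarrow> 'a"
    and B :: "'a \<Rightarrow> 'a set"
    and \<beta> \<theta> \<delta> \<delta>b alpha_m1 :: real
    and x :: "nat \<Rightarrow> 'a" and alpha :: "nat \<Rightarrow> real" and k :: nat
  defines "A \<equiv> (\<lambda>z. A1 z + A2 z)"
  assumes "\<beta> > 0" and "cocoercive \<beta> A1"
    and "maximal_monotone (\<lambda>z. {A2 z})" and "uniformly_continuous_on UNIV A2"
    and "maximal_monotone B"
    and "zer_sum A B \<noteq> {}"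
    and "0 < \<theta>" "\<theta> < 1" "0 < \<delta>" "\<delta> < 1" "\<delta>b > 0" "1 - \<delta> - \<delta>b > 0"
    and "alpha_m1 > 0" "alpha_m1 \<le> 4 * \<beta> * \<delta>b"
    and alpha_rule: "\<forall>i\<le>k. alpha i =
           (if i = 0 then alpha_m1 else alpha (i - 1)) *
             \<theta> ^ ls_index B A A2 \<theta> \<delta> (if i = 0 then alpha_m1 else alpha (i - 1)) (x i)"
    and x_rule: "(\<forall>i<k. x (Suc i) = proj (T_set B A A2 \<delta>b (alpha i) (x i)) (x i))
        \<or> (\<forall>i<k. x (Suc i) = proj (T_set B A A2 \<delta>b (alpha i) (x i) \<inter> Gamma_set (x 0) (x i)) (x 0))"
  shows "x k \<in> T_set B A A2 \<delta>b (alpha k) (x k) \<longleftrightarrow> x k \<in> zer_sum A B"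
proof -
  note mm = \<open>maximal_monotone B\<close>
  have apos: "\<forall>i\<le>k. alpha i > 0"
  proof (intro allI impI)
    fix i assume "i \<le> k"
    then show "alpha i > 0"
    proof (induction i)
      case 0
      then show ?case using alpha_rule \<open>alpha_m1 > 0\<close> \<open>0 < \<theta>\<close> by auto
    next
      case (Suc i)
      then have "alpha i > 0" by simp
      moreover have "alpha (Suc i) = alpha i * \<theta> ^ ls_index B A A2 \<theta> \<delta> (alpha i) (x (Suc i))"
        using alpha_rule Suc.prems by auto
      ultimately show ?case using \<open>0 < \<theta>\<close> by simp
    qed
  qed
  define a where "a = (if k = 0 then alpha_m1 else alpha (k - 1))"
  have a: "a > 0" using apos \<open>alpha_m1 > 0\<close> by (auto simp: a_def)
  define j where "j = ls_index B A A2 \<theta> \<delta> a (x k)"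
  have alk: "alpha k = a * \<theta> ^ j" using alpha_rule by (simp add: a_def j_def)
  define mu where "mu = alpha k"
  have mu: "mu > 0" using apos by (simp add: mu_def)
  define xk where "xk = x k"
  define p where "p = fb_point B A mu xk"
  have T: "T_set B A A2 \<delta>b mu xk =
      {y. inner ((1 / mu) *\<^sub>R (xk - p) - (A2 xk - A2 p)) (y - p) \<le> (\<delta>b / mu) * (norm (xk - p))\<^sup>2}"
    by (simp add: T_set_def p_def Let_def)
  have "xk \<in> T_set B A A2 \<delta>b mu xk \<longleftrightarrow> xk \<in> zer_sum A B"
  proof
    assume "xk \<in> zer_sum A B"
    then have "p = xk" using fb_fix_iff[OF mm mu] by (simp add: p_def)
    then show "xk \<in> T_set B A A2 \<delta>b mu xk" unfolding T by simp
  next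
    assume inT: "xk \<in> T_set B A A2 \<delta>b mu xk"
    show "xk \<in> zer_sum A B"
    proof (rule ccontr)
      assume nz: "xk \<notin> zer_sum A B"
      have ex: "\<exists>j. a * \<theta> ^ j * inner (A2 xk - A2 (fb_point B A (a * \<theta> ^ j) xk)) (xk - fb_point B A (a * \<theta> ^ j) xk)
        \<le> \<delta> * (norm (xk - fb_point B A (a * \<theta> ^ j) xk))\<^sup>2"
        by (rule ls_exists[OF mm \<open>uniformly_continuous_on UNIV A2\<close> a \<open>0 < \<theta>\<close> \<open>\<theta> < 1\<close> \<open>0 < \<delta>\<close> nz])
      have "a * \<theta> ^ j * inner (A2 xk - A2 (fb_point B A (a * \<theta> ^ j) xk)) (xk - fb_point B A (a * \<theta> ^ j) xk)
        \<le> \<delta> * (norm (xk - fb_point B A (a * \<theta> ^ j) xk))\<^sup>2"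
        unfolding j_def ls_index_def xk_def[symmetric] by (rule LeastI_ex[OF ex])
      then have ls: "mu * inner (A2 xk - A2 p) (xk - p) \<le> \<delta> * (norm (xk - p))\<^sup>2"
        by (simp add: mu_def alk p_def)
      have "inner ((1 / mu) *\<^sub>R (xk - p) - (A2 xk - A2 p)) (xk - p) \<le> (\<delta>b / mu) * (norm (xk - p))\<^sup>2"
        using inT unfolding T by simp
      moreover have "inner ((1 / mu) *\<^sub>R (xk - p) - (A2 xk - A2 p)) (xk - p)
          = (norm (xk - p))\<^sup>2 / mu - inner (A2 xk - A2 p) (xk - p)"
        by (simp add: inner_simps power2_norm_eq_inner diff_divide_distrib)
      ultimately have "(norm (xk - p))\<^sup>2 / mu - inner (A2 xk - A2 p) (xk - p) \<le> (\<delta>b / mu) * (norm (xk - p))\<^sup>2"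
        by simp
      then have "mu * ((norm (xk - p))\<^sup>2 / mu - inner (A2 xk - A2 p) (xk - p)) \<le> mu * ((\<delta>b / mu) * (norm (xk - p))\<^sup>2)"
        using mu by (intro mult_left_mono) auto
      moreover have "mu * ((norm (xk - p))\<^sup>2 / mu - inner (A2 xk - A2 p) (xk - p)) = (norm (xk - p))\<^sup>2 - mu * inner (A2 xk - A2 p) (xk - p)"
        using mu by (simp add: right_diff_distrib)
      moreover have "mu * ((\<delta>b / mu) * (norm (xk - p))\<^sup>2) = \<delta>b * (norm (xk - p))\<^sup>2"
        using mu by simp
      ultimately have "(norm (xk - p))\<^sup>2 - mu * inner (A2 xk - A2 p) (xk - p) \<le> \<delta>b * (norm (xk - p))\<^sup>2"
        by simp
      then have "(1 - \<delta> - \<delta>b) * (norm (xk - p))\<^sup>2 \<le> 0" using ls by (simp add: algebra_simps)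
      then have "(norm (xk - p))\<^sup>2 \<le> 0" using \<open>1 - \<delta> - \<delta>b > 0\<close>
        by (simp add: mult_le_0_iff)
      then have "p = xk" by simp
      then show False using fb_fix_iff[OF mm mu] nz by (simp add: p_def)
    qed
  qed
  then show ?thesis by (simp add: xk_def mu_def)
qed


end
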